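(* Let $k\ge 1$, $n\ge 2$, and let $s,t\in S(n,k)$ be compatible. Let $\alpha$ be the number of occurrences in $s$ of a most frequent symbol of $s$. Then $d(s,t)\le 2(n-\alpha)$.
   Context: Strings here are arbitrary (not normalized) finite words. The prefix reversal (flip) $f^{(i)}$ applied to $s=s_1\cdots s_n$ ($1\le i\le n$) yields $s_i s_{i-1}\cdots s_1 s_{i+1}\cdots s_n$. Two strings are \emph{compatible} if each symbol occurs the same number of times in both. For compatible $s,t$, $d(s,t)$ is the minimum number of prefix reversals transforming $s$ into $t$. $S(n,k)$ is the set of strings of length $n$ whose set of occurring symbols is exactly $\{0,\dots,k-1\}$. *)

theory Defs
  imports "HOL-Library.Multiset"
begin

definition flip :: "nat \<Rightarrow> nat list \<Rightarrow> nat list" where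
  "flip i s = rev (take i s) @ drop i s"

fun apply_flips :: "nat list \<Rightarrow> nat list \<Rightarrow> nat list" where
  "apply_flips [] s = s"
| "apply_flips (i # is) s = apply_flips is (flip i s)"

definition valid_flips :: "nat \<Rightarrow> nat list \<Rightarrow> bool" where
  "valid_flips n is \<longleftrightarrow> (\<forall>i \<in> set is. 1 \<le> i \<and> i \<le> n)"

definition compatible :: "nat list \<Rightarrow> nat list \<Rightarrow> bool" where
  "compatible s t \<longleftrightarrow> mset s = mset t"

definition flip_dist :: "nat list \<Rightarrow> nat list \<Rightarrow> nat" where
  "flip_dist s t = (LEAST m. \<exists>is. length is = m \<and> valid_flips (length s) is \<and> apply_flips is s = t)"

definition S :: "nat \<Rightarrow> nat \<Rightarrow> nat list set" where
  "S n k = {s. length s = n \<and> set s = {0..<k}}"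

definition max_mult :: "nat list \<Rightarrow> nat" where
  "max_mult s = Max ((\<lambda>a. count (mset s) a) ` set s)"

end

theory Submission
  imports Defs
begin

lemma flip_append: "i \<le> length u \<Longrightarrow> flip i (u @ w) = flip i u @ w"
  by (simp add: flip_def)

lemma length_flip[simp]: "length (flip i u) = length u"
  by (simp add: flip_def)

lemma apply_flips_lift:
  "valid_flips (length u) is \<Longrightarrow> apply_flips is (u @ w) = apply_flips is u @ w"
proof (induction "is" arbitrary: u)
  case Nil
  then show ?case by simp
next
  case (Cons i js)
  then have "i \<le> length u" "valid_flips (length (flip i u)) js"
    by (auto simp: valid_flips_def)
  then show ?case using Cons.IH by (simp add: flip_append)
qed

lemma apply_flips_append: "apply_flips (xs @ ys) s = apply_flips ys (apply_flips xs s)"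
  by (induction xs arbitrary: s) auto

lemma flip1: "flip (Suc (length u)) (u @ x # v) = x # rev u @ v"
  by (simp add: flip_def)

lemma flip2: "flip (Suc (length u)) (x # rev u @ v) = u @ x # v"
  by (simp add: flip_def)

lemma flipall: "length w = n \<Longrightarrow> flip n w = rev w"
  by (simp add: flip_def)

lemma main:
  "\<forall>s t. length s = n \<longrightarrow> length t = n \<longrightarrow> mset s = mset t \<longrightarrow>
     (\<exists>is. valid_flips n is \<and> apply_flips is s = t \<and> length is \<le> 2 * (n - count (mset s) a))"
proof (induction n)
  case 0
  then show ?case by (auto simp: valid_flips_def intro!: exI[of _ "[]"])
next
  case (Suc m)
  show ?case
  proof (intro allI impI)
    fix s t :: "nat list"
    assume ls: "length s = Suc m" and lt: "length t = Suc m" and ms: "mset s = mset t"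
    obtain s0 x where s: "s = s0 @ [x]" using ls by (cases s rule: rev_exhaust) auto
    obtain t0 y where t: "t = t0 @ [y]" using lt by (cases t rule: rev_exhaust) auto
    have ls0: "length s0 = m" using ls s by simp
    have lt0: "length t0 = m" using lt t by simp
    have cm: "count (mset s0) a \<le> m" using ls0 by (metis count_le_size size_mset)
    have vm: "\<And>js. valid_flips m js \<Longrightarrow> valid_flips (Suc m) js"
      by (auto simp: valid_flips_def)
    show "\<exists>is. valid_flips (Suc m) is \<and> apply_flips is s = t \<and> length is \<le> 2 * (Suc m - count (mset s) a)"
    proof (cases "y = a")
      case False
      have "y \<in> set s" using ms t by (metis in_multiset_in_set set_mset_mset list.set_intros(1) set_append UnCI mset_eq_setD)
      then obtain u v where suv: "s = u @ y # v" by (meson split_list)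
      have lu: "length u + 1 \<le> Suc m" using suv ls by simp
      define s' where "s' = rev v @ u"
      have ls': "length s' = m" using suv ls s'_def by simp
      have ap: "apply_flips [length u + 1, Suc m] s = s' @ [y]"
        using suv ls by (simp add: flip1 flipall s'_def)
      have "mset s' + {#y#} = mset t0 + {#y#}" using ms suv t s'_def by (simp add: add.commute)
      then have ms': "mset s' = mset t0" by simp
      have cs: "count (mset s') a = count (mset s) a" using suv s'_def False by simp
      obtain js where js: "valid_flips m js" "apply_flips js s' = t0"
          "length js \<le> 2 * (m - count (mset s') a)"
        using Suc.IH ls' lt0 ms' by blast
      have "apply_flips ([length u + 1, Suc m] @ js) s = t"
      proof -
        have "apply_flips ([length u + 1, Suc m] @ js) s = apply_flips js (s' @ [y])"
          unfolding apply_flips_append ap by (rule refl)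
        also have "\<dots> = apply_flips js s' @ [y]"
          using apply_flips_lift[of s' js "[y]"] js(1) ls' by simp
        finally show ?thesis using js(2) t by simp
      qed
      moreover have "valid_flips (Suc m) ([length u + 1, Suc m] @ js)"
        using vm[OF js(1)] lu by (auto simp: valid_flips_def)
      moreover have "length ([length u + 1, Suc m] @ js) \<le> 2 * (Suc m - count (mset s) a)"
        proof -
        have "count (mset s') a \<le> m" using ls' by (metis count_le_size size_mset)
        then show ?thesis using js(3) cs by simp
      qed
      ultimately show ?thesis by blast
    next
      case True
      show ?thesis
      proof (cases "x = a")
        case True
        have ms': "mset s0 = mset t0" using ms s t \<open>y = a\<close> True by simp
        obtain js where js: "valid_flips m js" "apply_flips js s0 = t0"
            "length js \<le> 2 * (m - count (mset s0) a)"
          using Suc.IH ls0 lt0 ms' by blast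
        have cs: "count (mset s) a = count (mset s0) a + 1" using s True by simp
        have "apply_flips js s = t"
          using apply_flips_lift[of s0 js "[x]"] js ls0 s t True \<open>y = a\<close> by simp
        moreover have "length js \<le> 2 * (Suc m - count (mset s) a)" using js(3) cs by simp
        ultimately show ?thesis using vm[OF js(1)] by blast
      next
        case False
        have "x \<in> set t" using ms s by (metis list.set_intros(1) set_append UnCI mset_eq_setD)
        then obtain u v where tuv: "t = u @ x # v" by (meson split_list)
        have lu: "length u + 1 \<le> Suc m" using tuv lt by simp
        define t' where "t' = rev v @ u"
        have lt': "length t' = m" using tuv lt t'_def by simp
        have ap: "apply_flips [Suc m, length u + 1] (t' @ [x]) = t"
          using tuv lt lt' by (simp add: flip1 flip2 flipall t'_def)
        have "mset s0 + {#x#} = mset t' + {#x#}" using ms tuv s t'_def by (simp add: add.commute)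
        then have ms': "mset s0 = mset t'" by simp
        have cs: "count (mset s0) a = count (mset s) a" using s False by simp
        obtain js where js: "valid_flips m js" "apply_flips js s0 = t'"
            "length js \<le> 2 * (m - count (mset s0) a)"
          using Suc.IH ls0 lt' ms' by blast
        have "apply_flips (js @ [Suc m, length u + 1]) s = t"
        proof -
          have "apply_flips (js @ [Suc m, length u + 1]) s = apply_flips [Suc m, length u + 1] (apply_flips js (s0 @ [x]))"
            unfolding apply_flips_append s by (rule refl)
          also have "apply_flips js (s0 @ [x]) = t' @ [x]"
            using apply_flips_lift[of s0 js "[x]"] js(1,2) ls0 by simp
          finally show ?thesis using ap by simp
        qed
        moreover have "valid_flips (Suc m) (js @ [Suc m, length u + 1])"
          using vm[OF js(1)] lu by (auto simp: valid_flips_def)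
        moreover have "length (js @ [Suc m, length u + 1]) \<le> 2 * (Suc m - count (mset s) a)"
          using js(3) cs cm by simp
        ultimately show ?thesis by blast
      qed
    qed
  qed
qed

lemma dist_le:
  "valid_flips (length s) is \<Longrightarrow> apply_flips is s = t \<Longrightarrow> flip_dist s t \<le> length is"
  unfolding flip_dist_def by (rule Least_le) blast

theorem lemma5p2:
  fixes n k :: nat and s t :: "nat list"
  assumes "k \<ge> 1" and "n \<ge> 2"
    and "s \<in> S n k" and "t \<in> S n k"
    and "compatible s t"
  shows "flip_dist s t \<le> 2 * (n - max_mult s)"
proof -
  have ls: "length s = n" and lt: "length t = n" using assms(3,4) by (auto simp: S_def)
  have ne: "set s \<noteq> {}" using ls assms(2) by auto
  have "max_mult s \<in> (\<lambda>a. count (mset s) a) ` set s"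
    unfolding max_mult_def using ne by (intro Max_in) auto
  then obtain a where a: "max_mult s = count (mset s) a" by auto
  obtain "is" where "valid_flips n is" "apply_flips is s = t" "length is \<le> 2 * (n - count (mset s) a)"
    using main[of n a] ls lt assms(5) by (auto simp: compatible_def)
  then show ?thesis using dist_le[of s "is" t] ls a by simp
qed

end
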